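(* Let $(\mathcal{B}_1,\mathcal{B}_0)$ be a Rota-Baxter operator on a crossed module of Lie groups $(H,G,t,\Phi)$ and let $\mathcal{C}$ be the small category associated with $(H,G,t,\Phi)$. Define $\mathcal{B}:G\times H\to G\times H$ by $$\mathcal{B}(a,p)=\Big(\mathcal{B}_0(a),\ \Phi(\mathcal{B}_0(a))\,\mathcal{B}_1\big(\Phi(\mathcal{B}_0(a)^{-1}a^{-1})p\big)\Big).$$ Then $F=(\mathcal{B},\mathcal{B}_0)$, acting by $\mathcal{B}_0$ on objects and by $\mathcal{B}$ on morphisms, is a functor from $\mathcal{C}$ to $\mathcal{C}$.
   Context: A crossed module of Lie groups is a quadruple $(H,G,t,\Phi)$ where $H,G$ are Lie groups, $t:H\to G$ is a Lie group homomorphism and $\Phi:G\to\mathrm{Aut}(H)$ is a smooth action of $G$ on $H$ by automorphisms such that $\Phi(t(p))q=pqp^{-1}$ and $t(\Phi(a)p)=a\,t(p)\,a^{-1}$ for all $p,q\in H$, $a\in G$. A Rota-Baxter operator on a Lie group $G$ is a smooth map $\mathcal{B}:G\to G$ with $\mathcal{B}(a)\mathcal{B}(b)=\mathcal{B}(a\mathcal{B}(a)b\mathcal{B}(a)^{-1})$ for all $a,b\in G$. A Rota-Baxter operator on a crossed module of Lie groups $(H,G,t,\Phi)$ is a pair $(\mathcal{B}_1,\mathcal{B}_0)$ of smooth maps $\mathcal{B}_1:H\to H$, $\mathcal{B}_0:G\to G$ such that (i) $\mathcal{B}_1,\mathcal{B}_0$ are Rota-Baxter operators on $H$, $G$; (ii)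 $t\circ\mathcal{B}_1=\mathcal{B}_0\circ t$; (iii) $\Phi(\mathcal{B}_0(a))\mathcal{B}_1(p)=\mathcal{B}_1\big(\Phi(a\mathcal{B}_0(a))(p\mathcal{B}_1(p))\cdot\Phi(\mathcal{B}_0(a))\mathcal{B}_1(p)^{-1}\big)$ for all $a\in G,p\in H$. The small category $\mathcal{C}$ associated with $(H,G,t,\Phi)$: objects $\mathcal{C}_0=G$, morphisms $\mathcal{C}_1=G\times H$, source $\mathfrak{s}(a,p)=a$, target $\mathfrak{t}(a,p)=t(p)a$, composition $(a,p)\circ(b,q)=(b,pq)$ whenever $t(q)b=a$, identities $1_a=(a,e_H)$. *)

theory Defs
  imports "HOL-Algebra.Group"
begin

definition crossed_module ::
  "('h, 'x) monoid_scheme \<Rightarrow> ('g, 'y) monoid_scheme \<Rightarrow> ('h \<Rightarrow> 'g) \<Rightarrow> ('g \<Rightarrow> 'h \<Rightarrow> 'h) \<Rightarrow> bool"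
where
  "crossed_module H G t \<Phi> \<longleftrightarrow>
     group H \<and> group G \<and> t \<in> hom H G \<and>
     (\<forall>a\<in>carrier G. \<Phi> a \<in> iso H H) \<and>
     (\<forall>p\<in>carrier H. \<Phi> \<one>\<^bsub>G\<^esub> p = p) \<and>
     (\<forall>a\<in>carrier G. \<forall>b\<in>carrier G. \<forall>p\<in>carrier H. \<Phi> (a \<otimes>\<^bsub>G\<^esub> b) p = \<Phi> a (\<Phi> b p)) \<and>
     (\<forall>p\<in>carrier H. \<forall>q\<in>carrier H. \<Phi> (t p) q = p \<otimes>\<^bsub>H\<^esub> q \<otimes>\<^bsub>H\<^esub> inv\<^bsub>H\<^esub> p) \<and>
     (\<forall>a\<in>carrier G. \<forall>p\<in>carrier H. t (\<Phi> a p) = a \<otimes>\<^bsub>G\<^esub> t p \<otimes>\<^bsub>G\<^esub> inv\<^bsub>G\<^esub> a)"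

definition rota_baxter :: "('g, 'y) monoid_scheme \<Rightarrow> ('g \<Rightarrow> 'g) \<Rightarrow> bool" where
  "rota_baxter G B \<longleftrightarrow>
     (\<forall>a\<in>carrier G. B a \<in> carrier G) \<and>
     (\<forall>a\<in>carrier G. \<forall>b\<in>carrier G.
        B a \<otimes>\<^bsub>G\<^esub> B b = B (a \<otimes>\<^bsub>G\<^esub> B a \<otimes>\<^bsub>G\<^esub> b \<otimes>\<^bsub>G\<^esub> inv\<^bsub>G\<^esub> (B a)))"

definition rota_baxter_cm ::
  "('h, 'x) monoid_scheme \<Rightarrow> ('g, 'y) monoid_scheme \<Rightarrow> ('h \<Rightarrow> 'g) \<Rightarrow> ('g \<Rightarrow> 'h \<Rightarrow> 'h)
    \<Rightarrow> ('h \<Rightarrow> 'h) \<Rightarrow> ('g \<Rightarrow> 'g) \<Rightarrow> bool"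
where
  "rota_baxter_cm H G t \<Phi> B1 B0 \<longleftrightarrow>
     rota_baxter H B1 \<and> rota_baxter G B0 \<and>
     (\<forall>p\<in>carrier H. t (B1 p) = B0 (t p)) \<and>
     (\<forall>a\<in>carrier G. \<forall>p\<in>carrier H.
        \<Phi> (B0 a) (B1 p) =
        B1 (\<Phi> (a \<otimes>\<^bsub>G\<^esub> B0 a) (p \<otimes>\<^bsub>H\<^esub> B1 p) \<otimes>\<^bsub>H\<^esub> inv\<^bsub>H\<^esub> (\<Phi> (B0 a) (B1 p))))"

(* Small categories, given by objects, morphisms, source, target, composition
   ("comp g f" = g \<circ> f, defined when target f = source g) and identities. *)
record ('o, 'm) small_cat =
  Obj :: "'o set"
  Mor :: "'m set"
  src :: "'m \<Rightarrow> 'o"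
  tgt :: "'m \<Rightarrow> 'o"
  comp :: "'m \<Rightarrow> 'm \<Rightarrow> 'm"
  ident :: "'o \<Rightarrow> 'm"

definition is_functor ::
  "('o, 'm) small_cat \<Rightarrow> ('o2, 'm2) small_cat \<Rightarrow> ('o \<Rightarrow> 'o2) \<Rightarrow> ('m \<Rightarrow> 'm2) \<Rightarrow> bool"
where
  "is_functor C D F0 F1 \<longleftrightarrow>
     (\<forall>x\<in>Obj C. F0 x \<in> Obj D) \<and>
     (\<forall>f\<in>Mor C. F1 f \<in> Mor D) \<and>
     (\<forall>f\<in>Mor C. src D (F1 f) = F0 (src C f) \<and> tgt D (F1 f) = F0 (tgt C f)) \<and>
     (\<forall>f\<in>Mor C. \<forall>g\<in>Mor C. tgt C f = src C g \<longrightarrow>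
        F1 (comp C g f) = comp D (F1 g) (F1 f)) \<and>
     (\<forall>x\<in>Obj C. F1 (ident C x) = ident D (F0 x))"

definition assoc_cat ::
  "('h, 'x) monoid_scheme \<Rightarrow> ('g, 'y) monoid_scheme \<Rightarrow> ('h \<Rightarrow> 'g) \<Rightarrow> ('g, 'g \<times> 'h) small_cat"
where
  "assoc_cat H G t =
     \<lparr> Obj = carrier G,
       Mor = carrier G \<times> carrier H,
       src = (\<lambda>(a, p). a),
       tgt = (\<lambda>(a, p). t p \<otimes>\<^bsub>G\<^esub> a),
       comp = (\<lambda>(a, p) (b, q). (b, p \<otimes>\<^bsub>H\<^esub> q)),
       ident = (\<lambda>a. (a, \<one>\<^bsub>H\<^esub>)) \<rparr>"

definition cm_B ::
  "('h, 'x) monoid_scheme \<Rightarrow> ('g, 'y) monoid_scheme \<Rightarrow> ('g \<Rightarrow> 'h \<Rightarrow> 'h)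
    \<Rightarrow> ('h \<Rightarrow> 'h) \<Rightarrow> ('g \<Rightarrow> 'g) \<Rightarrow> 'g \<times> 'h \<Rightarrow> 'g \<times> 'h"
where
  "cm_B H G \<Phi> B1 B0 = (\<lambda>(a, p).
     (B0 a, \<Phi> (B0 a) (B1 (\<Phi> (inv\<^bsub>G\<^esub> (B0 a) \<otimes>\<^bsub>G\<^esub> inv\<^bsub>G\<^esub> a) p))))"

end

theory Submission
  imports Defs
begin

locale cmrb =
  fixes H :: "('h, 'x) monoid_scheme" and G :: "('g, 'y) monoid_scheme"
    and t and \<Phi> and B1 and B0
  assumes cm: "crossed_module H G t \<Phi>"
    and rb: "rota_baxter_cm H G t \<Phi> B1 B0"
begin

lemma grpH: "group H" using cm unfolding crossed_module_def by simp
lemma grpG: "group G" using cm unfolding crossed_module_def by simp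

sublocale H: group H by (rule grpH)
sublocale G: group G by (rule grpG)

lemma thom: "group_hom H G t"
  using cm unfolding crossed_module_def group_hom_def group_hom_axioms_def by simp

lemma Phihom: "a \<in> carrier G \<Longrightarrow> group_hom H H (\<Phi> a)"
  using cm unfolding crossed_module_def group_hom_def group_hom_axioms_def iso_def by simp

lemma t_closed[simp]: "p \<in> carrier H \<Longrightarrow> t p \<in> carrier G"
  using group_hom.hom_closed[OF thom] by simp
lemma t_mult[simp]: "p \<in> carrier H \<Longrightarrow> q \<in> carrier H \<Longrightarrow> t (p \<otimes>\<^bsub>H\<^esub> q) = t p \<otimes>\<^bsub>G\<^esub> t q"
  using group_hom.hom_mult[OF thom] by simp
lemma t_inv[simp]: "p \<in> carrier H \<Longrightarrow> t (inv\<^bsub>H\<^esub> p) = inv\<^bsub>G\<^esub> t p"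
  using group_hom.hom_inv[OF thom] by simp

lemma Phi_closed[simp]: "a \<in> carrier G \<Longrightarrow> p \<in> carrier H \<Longrightarrow> \<Phi> a p \<in> carrier H"
  using group_hom.hom_closed[OF Phihom] by simp
lemma Phi_mult[simp]: "a \<in> carrier G \<Longrightarrow> p \<in> carrier H \<Longrightarrow> q \<in> carrier H \<Longrightarrow>
   \<Phi> a (p \<otimes>\<^bsub>H\<^esub> q) = \<Phi> a p \<otimes>\<^bsub>H\<^esub> \<Phi> a q"
  using group_hom.hom_mult[OF Phihom] by simp
lemma Phi_inv[simp]: "a \<in> carrier G \<Longrightarrow> p \<in> carrier H \<Longrightarrow> \<Phi> a (inv\<^bsub>H\<^esub> p) = inv\<^bsub>H\<^esub> \<Phi> a p"
  using group_hom.hom_inv[OF Phihom] by simp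
lemma Phi_comp: "a \<in> carrier G \<Longrightarrow> b \<in> carrier G \<Longrightarrow> p \<in> carrier H \<Longrightarrow> \<Phi> (a \<otimes>\<^bsub>G\<^esub> b) p = \<Phi> a (\<Phi> b p)"
  using cm unfolding crossed_module_def by simp
lemma Phi_t: "p \<in> carrier H \<Longrightarrow> q \<in> carrier H \<Longrightarrow> \<Phi> (t p) q = p \<otimes>\<^bsub>H\<^esub> q \<otimes>\<^bsub>H\<^esub> inv\<^bsub>H\<^esub> p"
  using cm unfolding crossed_module_def by simp
lemma t_Phi: "a \<in> carrier G \<Longrightarrow> p \<in> carrier H \<Longrightarrow> t (\<Phi> a p) = a \<otimes>\<^bsub>G\<^esub> t p \<otimes>\<^bsub>G\<^esub> inv\<^bsub>G\<^esub> a"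
  using cm unfolding crossed_module_def by simp

lemma B0_closed[simp]: "a \<in> carrier G \<Longrightarrow> B0 a \<in> carrier G"
  using rb unfolding rota_baxter_cm_def rota_baxter_def by simp
lemma B1_closed[simp]: "p \<in> carrier H \<Longrightarrow> B1 p \<in> carrier H"
  using rb unfolding rota_baxter_cm_def rota_baxter_def by simp
lemma B0_rb: "a \<in> carrier G \<Longrightarrow> b \<in> carrier G \<Longrightarrow>
   B0 a \<otimes>\<^bsub>G\<^esub> B0 b = B0 (a \<otimes>\<^bsub>G\<^esub> B0 a \<otimes>\<^bsub>G\<^esub> b \<otimes>\<^bsub>G\<^esub> inv\<^bsub>G\<^esub> (B0 a))"
  using rb unfolding rota_baxter_cm_def rota_baxter_def by simp
lemma B1_rb: "a \<in> carrier H \<Longrightarrow> b \<in> carrier H \<Longrightarrow>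
   B1 a \<otimes>\<^bsub>H\<^esub> B1 b = B1 (a \<otimes>\<^bsub>H\<^esub> B1 a \<otimes>\<^bsub>H\<^esub> b \<otimes>\<^bsub>H\<^esub> inv\<^bsub>H\<^esub> (B1 a))"
  using rb unfolding rota_baxter_cm_def rota_baxter_def by simp
lemma tB1: "p \<in> carrier H \<Longrightarrow> t (B1 p) = B0 (t p)"
  using rb unfolding rota_baxter_cm_def by simp

lemma Gc1[simp]: "x \<in> carrier G \<Longrightarrow> y \<in> carrier G \<Longrightarrow> x \<otimes>\<^bsub>G\<^esub> (inv\<^bsub>G\<^esub> x \<otimes>\<^bsub>G\<^esub> y) = y"
  by (simp flip: G.m_assoc)
lemma Gc2[simp]: "x \<in> carrier G \<Longrightarrow> y \<in> carrier G \<Longrightarrow> inv\<^bsub>G\<^esub> x \<otimes>\<^bsub>G\<^esub> (x \<otimes>\<^bsub>G\<^esub> y) = y"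
  by (simp flip: G.m_assoc)
lemma Hc1[simp]: "x \<in> carrier H \<Longrightarrow> y \<in> carrier H \<Longrightarrow> x \<otimes>\<^bsub>H\<^esub> (inv\<^bsub>H\<^esub> x \<otimes>\<^bsub>H\<^esub> y) = y"
  by (simp flip: H.m_assoc)
lemma Hc2[simp]: "x \<in> carrier H \<Longrightarrow> y \<in> carrier H \<Longrightarrow> inv\<^bsub>H\<^esub> x \<otimes>\<^bsub>H\<^esub> (x \<otimes>\<^bsub>H\<^esub> y) = y"
  by (simp flip: H.m_assoc)

lemma B1_one: "B1 \<one>\<^bsub>H\<^esub> = \<one>\<^bsub>H\<^esub>"
proof -
  have "B1 \<one>\<^bsub>H\<^esub> \<otimes>\<^bsub>H\<^esub> B1 \<one>\<^bsub>H\<^esub> = B1 \<one>\<^bsub>H\<^esub>"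
    using B1_rb[of "\<one>\<^bsub>H\<^esub>" "\<one>\<^bsub>H\<^esub>"] by (simp add: H.m_assoc)
  then show ?thesis
    by (metis B1_closed H.l_cancel_one' H.one_closed)
qed

lemma tgt_ok:
  assumes a: "a \<in> carrier G" and p: "p \<in> carrier H"
  shows "t (\<Phi> (B0 a) (B1 (\<Phi> (inv\<^bsub>G\<^esub> (B0 a) \<otimes>\<^bsub>G\<^esub> inv\<^bsub>G\<^esub> a) p))) \<otimes>\<^bsub>G\<^esub> B0 a
     = B0 (t p \<otimes>\<^bsub>G\<^esub> a)"
proof -
  define c where "c = inv\<^bsub>G\<^esub> (B0 a) \<otimes>\<^bsub>G\<^esub> inv\<^bsub>G\<^esub> a"
  have c: "c \<in> carrier G" using a by (simp add: c_def)
  have "t (\<Phi> (B0 a) (B1 (\<Phi> c p))) \<otimes>\<^bsub>G\<^esub> B0 a = B0 a \<otimes>\<^bsub>G\<^esub> B0 (t (\<Phi> c p))"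
    using a c p by (simp add: t_Phi tB1 G.m_assoc)
  also have "\<dots> = B0 (a \<otimes>\<^bsub>G\<^esub> B0 a \<otimes>\<^bsub>G\<^esub> t (\<Phi> c p) \<otimes>\<^bsub>G\<^esub> inv\<^bsub>G\<^esub> (B0 a))"
    using a c p by (simp add: B0_rb)
  also have "a \<otimes>\<^bsub>G\<^esub> B0 a \<otimes>\<^bsub>G\<^esub> t (\<Phi> c p) \<otimes>\<^bsub>G\<^esub> inv\<^bsub>G\<^esub> (B0 a) = t p \<otimes>\<^bsub>G\<^esub> a"
    using a c p by (simp add: t_Phi c_def G.m_assoc G.inv_mult_group)
  finally show ?thesis unfolding c_def .
qed


definition X where "X a p = \<Phi> (B0 a) (B1 (\<Phi> (inv\<^bsub>G\<^esub> (B0 a) \<otimes>\<^bsub>G\<^esub> inv\<^bsub>G\<^esub> a) p))"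

lemma comp_ok:
  assumes b: "b \<in> carrier G" and p: "p \<in> carrier H" and q: "q \<in> carrier H"
    and a: "a = t q \<otimes>\<^bsub>G\<^esub> b"
  shows "X b (p \<otimes>\<^bsub>H\<^esub> q) = X a p \<otimes>\<^bsub>H\<^esub> X b q"
proof -
  have ac: "a \<in> carrier G" using a b q by simp
  define cb where "cb = inv\<^bsub>G\<^esub> (B0 b) \<otimes>\<^bsub>G\<^esub> inv\<^bsub>G\<^esub> b"
  define ca where "ca = inv\<^bsub>G\<^esub> (B0 a) \<otimes>\<^bsub>G\<^esub> inv\<^bsub>G\<^esub> a"
  have cbc: "cb \<in> carrier G" and cac: "ca \<in> carrier G" using ac b by (simp_all add: cb_def ca_def)
  define y where "y = \<Phi> cb q"
  define x where "x = \<Phi> ca p"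
  have yc: "y \<in> carrier H" and xc: "x \<in> carrier H" using cbc cac p q by (simp_all add: x_def y_def)
  have ty: "t y = cb \<otimes>\<^bsub>G\<^esub> t q \<otimes>\<^bsub>G\<^esub> inv\<^bsub>G\<^esub> cb" using cbc q by (simp add: y_def t_Phi)
  have s1: "B0 a = B0 b \<otimes>\<^bsub>G\<^esub> B0 (t y)"
  proof -
    have "B0 b \<otimes>\<^bsub>G\<^esub> B0 (t y) = B0 (b \<otimes>\<^bsub>G\<^esub> B0 b \<otimes>\<^bsub>G\<^esub> t y \<otimes>\<^bsub>G\<^esub> inv\<^bsub>G\<^esub> (B0 b))"
      using b yc by (simp add: B0_rb)
    also have "b \<otimes>\<^bsub>G\<^esub> B0 b \<otimes>\<^bsub>G\<^esub> t y \<otimes>\<^bsub>G\<^esub> inv\<^bsub>G\<^esub> (B0 b) = a"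
      using b q by (simp add: ty a cb_def G.m_assoc G.inv_mult_group)
    finally show ?thesis by simp
  qed
  have tyc: "B0 (t y) \<in> carrier G" using yc by simp
  have s2: "\<Phi> (B0 a) (B1 x) = \<Phi> (B0 b) (B1 y \<otimes>\<^bsub>H\<^esub> B1 x \<otimes>\<^bsub>H\<^esub> inv\<^bsub>H\<^esub> B1 y)"
    using b tyc xc yc by (simp add: s1 Phi_comp flip: tB1 add: Phi_t)
  have s3: "X a p \<otimes>\<^bsub>H\<^esub> X b q = \<Phi> (B0 b) (B1 y \<otimes>\<^bsub>H\<^esub> B1 x)"
    unfolding X_def using s2 b xc yc
    by (simp add: x_def y_def ca_def cb_def H.m_assoc flip: Phi_mult)
  have s4: "B1 y \<otimes>\<^bsub>H\<^esub> B1 x = B1 (y \<otimes>\<^bsub>H\<^esub> \<Phi> (B0 (t y)) x)"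
    using xc yc by (simp add: B1_rb Phi_t flip: tB1 add: H.m_assoc)
  have e: "B0 (t y) \<otimes>\<^bsub>G\<^esub> ca = cb \<otimes>\<^bsub>G\<^esub> t (inv\<^bsub>H\<^esub> q)"
  proof -
    have "B0 (t y) = inv\<^bsub>G\<^esub> (B0 b) \<otimes>\<^bsub>G\<^esub> B0 a" using s1 b tyc by simp
    then have "B0 (t y) \<otimes>\<^bsub>G\<^esub> ca = inv\<^bsub>G\<^esub> (B0 b) \<otimes>\<^bsub>G\<^esub> inv\<^bsub>G\<^esub> a"
      using b ac by (simp add: ca_def G.m_assoc)
    then show ?thesis using b q by (simp add: a cb_def G.m_assoc G.inv_mult_group)
  qed
  have s5: "y \<otimes>\<^bsub>H\<^esub> \<Phi> (B0 (t y)) x = \<Phi> cb (p \<otimes>\<^bsub>H\<^esub> q)"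
  proof -
    have "\<Phi> (B0 (t y)) x = \<Phi> cb (\<Phi> (t (inv\<^bsub>H\<^esub> q)) p)"
      using tyc cac cbc p q by (simp add: x_def flip: Phi_comp add: e)
    also have "\<dots> = \<Phi> cb (inv\<^bsub>H\<^esub> q \<otimes>\<^bsub>H\<^esub> p \<otimes>\<^bsub>H\<^esub> q)"
      using p q Phi_t[of "inv\<^bsub>H\<^esub> q" p] by (simp del: t_inv add: t_inv[symmetric])
    finally show ?thesis using cbc p q by (simp add: y_def H.m_assoc flip: Phi_mult)
  qed
  show ?thesis using s3 s4 s5 by (simp add: X_def cb_def y_def)
qed

end

theorem mainTheorem6:
  assumes "crossed_module H G t \<Phi>"
    and "rota_baxter_cm H G t \<Phi> B1 B0"
  shows "is_functor (assoc_cat H G t) (assoc_cat H G t) B0 (cm_B H G \<Phi> B1 B0)"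
proof -
  interpret cmrb H G t \<Phi> B1 B0 using assms by (unfold_locales)
  have B: "cm_B H G \<Phi> B1 B0 (a, p) = (B0 a, X a p)" for a p
    by (simp add: cm_B_def X_def)
  have Xc: "a \<in> carrier G \<Longrightarrow> p \<in> carrier H \<Longrightarrow> X a p \<in> carrier H" for a p
    by (simp add: X_def)
  show ?thesis
    unfolding is_functor_def assoc_cat_def
    apply (simp add: B Xc)
    apply (intro conjI ballI allI impI)
      apply (auto simp: B tgt_ok[unfolded X_def[symmetric]] X_def[symmetric] comp_ok)
    apply (simp add: X_def B1_one group_hom.hom_one[OF Phihom])
    done
qed

end
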